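(* Let $A\in\mathbb{R}^{n\times n}$, let $W\in\mathbb{R}^{n\times n}$ be symmetric positive definite, let $C=\mathrm{diag}(C_{11},\dots,C_{nn})$ be diagonal positive definite and $V=\mathrm{diag}(\sigma_1^2,\dots,\sigma_n^2)$ with $\sigma_j>0$. Let $\Sigma$ be the unique positive semidefinite solution of $\Sigma=A\Sigma A^T-A\Sigma C^T(C\Sigma C^T+V)^{-1}C\Sigma A^T+W$ (the steady-state a priori Kalman filter error covariance). Then $$\ln\det\Sigma\le\mathrm{tr}(A^TA)\frac{\sigma_l^2}{C_l^2}+\mathrm{tr}\,W.$$
   Context: The index $l$ is defined by $l=\arg\min_{1\le j\le n}C_{jj}^2/\sigma_j^2$, and $C_l:=C_{ll}$. *)

theory Defs
  imports "HOL-Analysis.Analysis"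
begin

definition psd_mat :: "real^'n^'n \<Rightarrow> bool" where
  "psd_mat M \<longleftrightarrow> transpose M = M \<and> (\<forall>x. 0 \<le> x \<bullet> (M *v x))"

definition pd_mat :: "real^'n^'n \<Rightarrow> bool" where
  "pd_mat M \<longleftrightarrow> transpose M = M \<and> (\<forall>x. x \<noteq> 0 \<longrightarrow> 0 < x \<bullet> (M *v x))"

definition diag_mat :: "('n \<Rightarrow> real) \<Rightarrow> real^'n^'n" where
  "diag_mat d = (\<chi> i j. if i = j then d i else 0)"

definition riccati :: "real^'n^'n \<Rightarrow> real^'n^'n \<Rightarrow> real^'n^'n \<Rightarrow> real^'n^'n \<Rightarrow> real^'n^'n \<Rightarrow> real^'n^'n" where
  "riccati A C V W S =
     A ** S ** transpose A
     - A ** S ** transpose C ** matrix_inv (C ** S ** transpose C + V) ** C ** S ** transpose A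
     + W"

end

theory Submission
  imports Defs
begin


lemma diag_mv: "diag_mat d *v x = (\<chi> i. d i * x$i)"
  unfolding diag_mat_def matrix_vector_mult_def vec_eq_iff
  by (auto simp: if_distrib[of "\<lambda>t. t * _"] sum.delta cong: if_cong)

lemma diag_transpose[simp]: "transpose (diag_mat d) = diag_mat d"
  by (simp add: diag_mat_def transpose_def vec_eq_iff)

lemma diag_quad: "x \<bullet> (diag_mat d *v y) = (\<Sum>i\<in>UNIV. d i * x$i * y$i)"
  by (simp add: diag_mv inner_vec_def mult.assoc mult.left_commute)

lemma inner_transp: "x \<bullet> ((M::real^'n^'n) *v y) = (transpose M *v x) \<bullet> y"
  by (simp add: dot_lmul_matrix)

lemma sym_inner: "transpose (M::real^'n^'n) = M \<Longrightarrow> x \<bullet> (M *v y) = (M *v x) \<bullet> y"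
  by (metis inner_transp)

lemma axis_quad: "axis i 1 \<bullet> ((M::real^'n^'n) *v axis i 1) = M$i$i"
  unfolding inner_vec_def matrix_vector_mult_def axis_def by (simp add: if_distrib[of "\<lambda>t. t * _"] if_distrib[of "\<lambda>t. _ * t"] sum.delta sum.delta' cong: if_cong)

lemma psd_add: "psd_mat A \<Longrightarrow> psd_mat B \<Longrightarrow> psd_mat (A + B)"
  by (auto simp: psd_mat_def matrix_vector_mult_add_rdistrib inner_add_right transpose_def vec_eq_iff)


lemma matrix_inv_right: "invertible (G::real^'n^'n) \<Longrightarrow> G ** matrix_inv G = mat 1"
  unfolding invertible_def matrix_inv_def by (rule someI2_ex) auto

lemma kalman_quad:
  fixes S :: "real^'n^'n" and c \<sigma> :: "'n \<Rightarrow> real" and y :: "real^'n"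
  assumes S: "psd_mat S" and c: "\<And>j. c j > 0" and \<sigma>: "\<And>j. \<sigma> j > 0"
  defines "C \<equiv> diag_mat c" and "V \<equiv> diag_mat (\<lambda>j. (\<sigma> j)\<^sup>2)"
  defines "H \<equiv> matrix_inv (C ** S ** C + V)"
  shows "0 \<le> y \<bullet> (S *v y) - (C *v (S *v y)) \<bullet> (H *v (C *v (S *v y)))"
   and "y \<bullet> (S *v y) - (C *v (S *v y)) \<bullet> (H *v (C *v (S *v y)))
          \<le> (\<Sum>j\<in>UNIV. (\<sigma> j)\<^sup>2/(c j)\<^sup>2 * (y$j)\<^sup>2)"
proof -
  define G where "G = C ** S ** C + V"
  have Ssym: "\<And>a b. a \<bullet> (S *v b) = (S *v a) \<bullet> b" using S unfolding psd_mat_def by (simp add: sym_inner)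
  have Spos: "\<And>a. 0 \<le> a \<bullet> (S *v a)" using S unfolding psd_mat_def by simp
  have Csym: "\<And>a b. a \<bullet> (C *v b) = (C *v a) \<bullet> b" unfolding C_def by (simp add: sym_inner)
  have Vsym: "\<And>a b. a \<bullet> (V *v b) = (V *v a) \<bullet> b" unfolding V_def by (simp add: sym_inner)
  have Gmv: "\<And>b. G *v b = C *v (S *v (C *v b)) + V *v b"
    unfolding G_def by (simp add: matrix_vector_mult_add_rdistrib matrix_vector_mul_assoc matrix_mul_assoc)
  have Vq: "\<And>b. b \<bullet> (V *v b) = (\<Sum>j\<in>UNIV. (\<sigma> j)\<^sup>2 * (b$j)\<^sup>2)"
    unfolding V_def diag_quad by (simp add: power2_eq_square mult.assoc)
  have Gsym: "\<And>a b. a \<bullet> (G *v b) = (G *v a) \<bullet> b"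
    unfolding Gmv inner_add_left inner_add_right
    by (metis Csym Ssym Vsym)
  have Gq: "\<And>b. b \<bullet> (G *v b) = (C *v b) \<bullet> (S *v (C *v b)) + (\<Sum>j\<in>UNIV. (\<sigma> j)\<^sup>2 * (b$j)\<^sup>2)"
    unfolding Gmv inner_add_right Vq by (simp only: Csym)
  have Gpos: "\<And>b. 0 \<le> b \<bullet> (G *v b)"
    unfolding Gq by (intro add_nonneg_nonneg Spos sum_nonneg) simp
  have Ginj: "\<And>b. G *v b = 0 \<Longrightarrow> b = 0"
  proof -
    fix b assume "G *v b = 0"
    hence "b \<bullet> (G *v b) = 0" by simp
    hence "(C *v b) \<bullet> (S *v (C *v b)) + (\<Sum>j\<in>UNIV. (\<sigma> j)\<^sup>2 * (b$j)\<^sup>2) = 0"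
      unfolding Gq .
    moreover have "0 \<le> (C *v b) \<bullet> (S *v (C *v b))" by (rule Spos)
    moreover have "0 \<le> (\<Sum>j\<in>UNIV. (\<sigma> j)\<^sup>2 * (b$j)\<^sup>2)" by (simp add: sum_nonneg)
    ultimately have "(\<Sum>j\<in>UNIV. (\<sigma> j)\<^sup>2 * (b$j)\<^sup>2) = 0" by linarith
    hence "\<forall>j\<in>UNIV. (\<sigma> j)\<^sup>2 * (b$j)\<^sup>2 = 0" by (subst (asm) sum_nonneg_eq_0_iff) auto
    thus "b = 0" using \<sigma> by (auto simp: vec_eq_iff) (metis less_irrefl)
  qed
  have "invertible G"
    unfolding invertible_left_inverse using Ginj matrix_left_invertible_ker by blast
  hence GH: "G ** H = mat 1" unfolding H_def G_def[symmetric] by (rule matrix_inv_right)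
  define w where "w = C *v (S *v y)"
  define v where "v = H *v w"
  have Gv: "G *v v = w" unfolding v_def by (simp add: matrix_vector_mul_assoc GH)
  show "0 \<le> y \<bullet> (S *v y) - (C *v (S *v y)) \<bullet> (H *v (C *v (S *v y)))"
  proof -
    define u where "u = y - C *v v"
    have e1: "u \<bullet> (S *v u) = y \<bullet> (S *v y) - 2 * (v \<bullet> w) + (C *v v) \<bullet> (S *v (C *v v))"
    proof -
      have a2: "(C *v v) \<bullet> (S *v y) = v \<bullet> w" unfolding w_def by (simp only: Csym)
      have a1: "y \<bullet> (S *v (C *v v)) = v \<bullet> w" using Ssym[of y "C *v v"] a2 inner_commute[of "S *v y" "C *v v"] by metis
      show ?thesis unfolding u_def matrix_vector_mult_diff_distrib inner_diff_left inner_diff_right a1 a2 w_def[symmetric]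
        by simp
    qed
    have e2: "(C *v v) \<bullet> (S *v (C *v v)) = v \<bullet> w - v \<bullet> (V *v v)"
    proof -
      have "v \<bullet> w = v \<bullet> (C *v (S *v (C *v v))) + v \<bullet> (V *v v)" by (simp only: Gv[unfolded Gmv, symmetric] inner_add_right)
      also have "v \<bullet> (C *v (S *v (C *v v))) = (C *v v) \<bullet> (S *v (C *v v))" by (simp only: Csym)
      finally show ?thesis by simp
    qed
    have "0 \<le> u \<bullet> (S *v u) + v \<bullet> (V *v v)"
      using Spos[of u] Vq[of v] by (simp add: sum_nonneg)
    thus ?thesis using e1 e2 unfolding v_def[symmetric] w_def[symmetric] by (simp add: inner_commute)
  qed
  show "y \<bullet> (S *v y) - (C *v (S *v y)) \<bullet> (H *v (C *v (S *v y)))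
          \<le> (\<Sum>j\<in>UNIV. (\<sigma> j)\<^sup>2/(c j)\<^sup>2 * (y$j)\<^sup>2)"
  proof -
    define q where "q = (\<chi> j. y$j / c j)"
    have Cq: "C *v q = y" unfolding C_def q_def diag_mv using c by (simp add: vec_eq_iff) (metis less_irrefl)
    have qVq: "q \<bullet> (V *v q) = (\<Sum>j\<in>UNIV. (\<sigma> j)\<^sup>2/(c j)\<^sup>2 * (y$j)\<^sup>2)"
      unfolding Vq q_def by (simp add: power_divide)
    have qw: "q \<bullet> w = y \<bullet> (S *v y)" unfolding w_def by (simp only: Csym Cq)
    have qGq: "q \<bullet> (G *v q) = y \<bullet> (S *v y) + q \<bullet> (V *v q)"
      unfolding Gmv inner_add_right by (simp only: Csym Cq)
    have "0 \<le> (q - v) \<bullet> (G *v (q - v))" by (rule Gpos)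
    also have "\<dots> = q \<bullet> (G *v q) - 2 * (q \<bullet> w) + v \<bullet> w"
    proof -
      have "v \<bullet> (G *v q) = q \<bullet> w" using Gsym[of v q] Gv by (simp add: inner_commute)
      thus ?thesis unfolding matrix_vector_mult_diff_distrib inner_diff_left inner_diff_right Gv
        by simp
    qed
    finally have "0 \<le> q \<bullet> (V *v q) - y \<bullet> (S *v y) + v \<bullet> w" using qGq qw by simp
    thus ?thesis unfolding qVq[symmetric] v_def[symmetric] w_def[symmetric] by (simp add: inner_commute)
  qed
qed



lemma congr_entry: "(transpose B ** (M::real^'n^'n) ** B)$i$j = (\<Sum>a\<in>UNIV. \<Sum>b\<in>UNIV. B$a$i * M$a$b * B$b$j)"
  by (simp add: matrix_matrix_mult_def transpose_def sum_distrib_left sum_distrib_right mult.assoc)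
     (rule sum.swap)

lemma sum_if_const: "(\<Sum>b\<in>S. if P then f b else 0) = (if P then (\<Sum>b\<in>S. f b) else 0)"
  by auto

lemma congr_entry_L:
  fixes M :: "real^'n^'n" and k :: 'n and \<alpha> d :: "'n \<Rightarrow> real"
  assumes "\<alpha> k = 0"
  defines "L \<equiv> (\<chi> i j. (if i = j then 1 else 0) - (if j = k then \<alpha> i else 0)) :: real^'n^'n"
  defines "B \<equiv> transpose L ** diag_mat d"
  shows "(transpose B ** M ** B)$i$j = d i * d j * (M$i$j - \<alpha> j * M$i$k - \<alpha> i * M$k$j + \<alpha> i * \<alpha> j * M$k$k)"
proof -
  have Be: "\<And>a i. B$a$i = d i * ((if a = i then 1 else 0) - (if a = k then \<alpha> i else 0))"
    unfolding B_def L_def diag_mat_def matrix_matrix_mult_def transpose_def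
    by (simp add: if_distrib[of "\<lambda>t. _ * t"] sum.delta' cong: if_cong)
  show ?thesis unfolding congr_entry Be
    by (simp add: algebra_simps sum.distrib sum_subtractf if_distrib[of "\<lambda>t. _ * t"] if_distrib[of "\<lambda>t. t * _"] sum.delta sum.delta' sum_if_const sum_distrib_left[symmetric] cong: if_cong)
qed


lemma pd_congr:
  fixes M B :: "real^'n^'n"
  assumes "pd_mat M" "det B \<noteq> 0"
  shows "pd_mat (transpose B ** M ** B)"
proof -
  have inj: "B *v x = 0 \<Longrightarrow> x = 0" for x
    using assms(2) invertible_det_nz[of B] invertible_left_inverse[of B] matrix_left_invertible_ker[of B] by blast
  have "transpose (transpose B ** M ** B) = transpose B ** M ** B"
    using assms(1) unfolding pd_mat_def by (simp add: matrix_transpose_mul matrix_mul_assoc)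
  moreover have "0 < x \<bullet> ((transpose B ** M ** B) *v x)" if "x \<noteq> 0" for x
  proof -
    have e: "(transpose B ** M ** B) *v x = transpose B *v (M *v (B *v x))"
      by (simp only: matrix_vector_mul_assoc matrix_mul_assoc)
    have "x \<bullet> ((transpose B ** M ** B) *v x) = (B *v x) \<bullet> (M *v (B *v x))"
      unfolding e by (simp only: inner_transp[of x "transpose B"] transpose_transpose)
    moreover have "B *v x \<noteq> 0" using inj that by blast
    ultimately show ?thesis using assms(1) unfolding pd_mat_def by simp
  qed
  ultimately show ?thesis unfolding pd_mat_def by blast
qed

lemma pd_diag_pos: "pd_mat M \<Longrightarrow> 0 < M$i$i"
  unfolding pd_mat_def using axis_quad[of i M] by (metis axis_eq_0_iff zero_neq_one)

lemma pd_sym: "pd_mat M \<Longrightarrow> M$i$j = M$j$i"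
  unfolding pd_mat_def by (metis transpose_def vec_lambda_beta)

lemma det_unit_col:
  fixes k :: "'n::finite" and \<alpha> :: "'n \<Rightarrow> real"
  assumes "\<alpha> k = 0"
  shows "det (transpose ((\<chi> i j. (if i = j then 1 else 0) - (if j = k then \<alpha> i else 0)) :: real^'n^'n)) = 1"
proof -
  define x :: "real^'n" where "x = (\<Sum>j\<in>UNIV-{k}. (- \<alpha> j) *s axis j 1)"
  have rowI: "row j (mat 1 :: real^'n^'n) = axis j 1" for j
    by (simp add: row_def mat_def axis_def vec_eq_iff)
  have xs: "x \<in> vec.span {row j (mat 1 :: real^'n^'n) |j. j \<noteq> k}"
    unfolding x_def rowI
    by (intro vec.span_sum vec.span_scale vec.span_base) auto
  have xe: "x = (\<chi> j. - \<alpha> j)"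
  proof (subst vec_eq_iff, intro allI)
    fix i
    have "x$i = (\<Sum>j\<in>UNIV-{k}. (if j = i then - \<alpha> j else 0))"
      unfolding x_def sum_component by (intro sum.cong) (auto simp: axis_def)
    also have "\<dots> = - \<alpha> i" using assms by (cases "i = k") (simp_all add: sum.delta)
    finally show "x$i = (\<chi> j. - \<alpha> j)$i" by simp
  qed
  have "transpose ((\<chi> i j. (if i = j then 1 else 0) - (if j = k then \<alpha> i else 0)) :: real^'n^'n)
        = (\<chi> r. if r = k then row k (mat 1) + x else row r (mat 1))"
    unfolding xe rowI using assms by (auto simp: transpose_def vec_eq_iff axis_def)
  also have "det \<dots> = 1" using det_row_span[OF xs] by simp
  finally show ?thesis .
qed


lemma hadamard_aux:
  fixes S :: "'n::finite set"
  assumes "finite S"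
  shows "\<And>M::real^'n^'n. pd_mat M \<Longrightarrow> (\<And>i j. i \<notin> S \<Longrightarrow> M$i$j = (if i = j then 1 else 0))
          \<Longrightarrow> 0 < det M \<and> det M \<le> (\<Prod>i\<in>S. M$i$i)"
  using assms
proof (induction S rule: finite_induct)
  case empty
  have "M = mat 1" using empty(2) by (simp add: vec_eq_iff mat_def)
  thus ?case by simp
next
  case (insert k S)
  note M = insert.prems(1) and Mid = insert.prems(2)
  define m where "m = M$k$k"
  have m: "0 < m" unfolding m_def by (rule pd_diag_pos[OF M])
  define \<alpha> where "\<alpha> i = (if i = k then 0 else M$i$k / m)" for i
  define L :: "real^'n^'n" where "L = (\<chi> i j. (if i = j then 1 else 0) - (if j = k then \<alpha> i else 0))"
  define d where "d i = (if i = k then 1 / sqrt m else 1)" for i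
  define B where "B = transpose L ** diag_mat d"
  define M2 where "M2 = transpose B ** M ** B"
  have \<alpha>k: "\<alpha> k = 0" by (simp add: \<alpha>_def)
  have detL: "det (transpose L) = 1" unfolding L_def by (rule det_unit_col[where \<alpha>=\<alpha> and k=k, OF \<alpha>k])
  have detD: "det (diag_mat d) = 1 / sqrt m"
  proof -
    have "det (diag_mat d) = (\<Prod>i\<in>UNIV. d i)"
      by (subst det_diagonal) (auto simp: diag_mat_def)
    also have "\<dots> = 1 / sqrt m" unfolding d_def by (simp add: prod.delta)
    finally show ?thesis .
  qed
  have detB: "det B = 1 / sqrt m" unfolding B_def det_mul detL detD by simp
  have detM2: "det M2 = det M / m"
    unfolding M2_def det_mul det_transpose detB using m
    by (simp add: field_simps real_sqrt_mult[symmetric])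
  have M2e: "M2$i$j = d i * d j * (M$i$j - \<alpha> j * M$i$k - \<alpha> i * M$k$j + \<alpha> i * \<alpha> j * M$k$k)" for i j
    unfolding M2_def B_def L_def by (rule congr_entry_L[where \<alpha>=\<alpha> and k=k, OF \<alpha>k])
  have M2pd: "pd_mat M2" unfolding M2_def by (rule pd_congr[OF M]) (use m detB in simp)
  have sym: "M$i$j = M$j$i" for i j by (rule pd_sym[OF M])
  have M2id: "M2$i$j = (if i = j then 1 else 0)" if "i \<notin> S" for i j
  proof (cases "i = k")
    case True
    show ?thesis
    proof (cases "j = k")
      case True
      with \<open>i = k\<close> show ?thesis using m unfolding M2e d_def \<alpha>_def m_def
        by (simp add: power2_eq_square[symmetric] power_divide)
    next
      case False
      with \<open>i = k\<close> show ?thesis using m unfolding M2e \<alpha>_def m_def by (simp add: sym[of j k])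
    qed
  next
    case False
    hence "i \<notin> insert k S" using that by simp
    hence Mi: "M$i$j' = (if i = j' then 1 else 0)" for j' using Mid by blast
    have "\<alpha> i = 0" using Mi[of k] False by (simp add: \<alpha>_def)
    thus ?thesis unfolding M2e using Mi[of j] Mi[of k] False by (simp add: d_def)
  qed
  have M2diag: "M2$i$i \<le> M$i$i" if "i \<in> S" for i
  proof -
    have ik: "i \<noteq> k" using that insert.hyps by auto
    have "M2$i$i = M$i$i - (M$i$k)\<^sup>2 / m" unfolding M2e using ik m
      by (simp add: d_def \<alpha>_def sym[of k i] m_def field_simps power2_eq_square)
    thus ?thesis using m by simp
  qed
  have IH: "0 < det M2 \<and> det M2 \<le> (\<Prod>i\<in>S. M2$i$i)" by (rule insert.IH[OF M2pd M2id])
  have dM: "det M = m * det M2" using detM2 m by simp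
  have "det M \<le> m * (\<Prod>i\<in>S. M2$i$i)" using IH m dM by simp
  also have "\<dots> \<le> m * (\<Prod>i\<in>S. M$i$i)"
    using m M2diag pd_diag_pos[OF M2pd] by (intro mult_left_mono prod_mono) (auto intro: less_imp_le)
  also have "\<dots> = (\<Prod>i\<in>insert k S. M$i$i)" using insert.hyps by (simp add: m_def)
  finally show ?case using dM IH m by simp
qed

lemma hadamard:
  fixes M :: "real^'n^'n"
  assumes "pd_mat M"
  shows "0 < det M" "det M \<le> (\<Prod>i\<in>UNIV. M$i$i)"
  using hadamard_aux[of UNIV M] assms by auto



lemma transpose_axis: "(transpose A *v axis i 1)$j = (A::real^'n^'n)$i$j"
  unfolding matrix_vector_mult_def transpose_def axis_def
  by (simp add: if_distrib[of "\<lambda>t. _ * t"] sum.delta cong: if_cong)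

lemma trace_AtA: "trace (transpose A ** A) = (\<Sum>i\<in>UNIV. \<Sum>j\<in>UNIV. ((A::real^'n^'n)$i$j)\<^sup>2)"
  unfolding trace_def matrix_matrix_mult_def transpose_def
  by (simp add: power2_eq_square) (rule sum.swap)

theorem theorem4:
  fixes A W \<Sigma> :: "real^'n^'n"
    and c \<sigma> :: "'n \<Rightarrow> real"
    and l :: 'n
  assumes W_pd: "pd_mat W"
    and c_pos: "\<And>j. c j > 0"
    and \<sigma>_pos: "\<And>j. \<sigma> j > 0"
    and l_min: "\<And>j. (c l)\<^sup>2 / (\<sigma> l)\<^sup>2 \<le> (c j)\<^sup>2 / (\<sigma> j)\<^sup>2"
    and \<Sigma>_psd: "psd_mat \<Sigma>"
    and \<Sigma>_sol: "\<Sigma> = riccati A (diag_mat c) (diag_mat (\<lambda>j. (\<sigma> j)\<^sup>2)) W \<Sigma>"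
    and \<Sigma>_unique: "\<And>S. psd_mat S \<Longrightarrow> S = riccati A (diag_mat c) (diag_mat (\<lambda>j. (\<sigma> j)\<^sup>2)) W S \<Longrightarrow> S = \<Sigma>"
  shows "ln (det \<Sigma>) \<le> trace (transpose A ** A) * ((\<sigma> l)\<^sup>2 / (c l)\<^sup>2) + trace W"
proof -
  define C where "C = diag_mat c"
  define V where "V = diag_mat (\<lambda>j. (\<sigma> j)\<^sup>2)"
  define H where "H = matrix_inv (C ** \<Sigma> ** C + V)"
  define Q where "Q y = y \<bullet> (\<Sigma> *v y) - (C *v (\<Sigma> *v y)) \<bullet> (H *v (C *v (\<Sigma> *v y)))" for y
  define s where "s = (\<sigma> l)\<^sup>2 / (c l)\<^sup>2"
  have Q0: "0 \<le> Q y" for y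
    unfolding Q_def C_def H_def V_def by (rule kalman_quad(1)[OF \<Sigma>_psd c_pos \<sigma>_pos])
  have Q1: "Q y \<le> (\<Sum>j\<in>UNIV. (\<sigma> j)\<^sup>2/(c j)\<^sup>2 * (y$j)\<^sup>2)" for y
    unfolding Q_def C_def H_def V_def by (rule kalman_quad(2)[OF \<Sigma>_psd c_pos \<sigma>_pos])
  have sj: "(\<sigma> j)\<^sup>2/(c j)\<^sup>2 \<le> s" for j
  proof -
    have p: "0 < (c j)\<^sup>2 / (\<sigma> j)\<^sup>2" "0 < (c l)\<^sup>2 / (\<sigma> l)\<^sup>2" using c_pos \<sigma>_pos by (auto intro!: divide_pos_pos) (metis less_irrefl)+
    have "1 / ((c j)\<^sup>2 / (\<sigma> j)\<^sup>2) \<le> 1 / ((c l)\<^sup>2 / (\<sigma> l)\<^sup>2)"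
      by (rule divide_left_mono[OF l_min[of j] zero_le_one mult_pos_pos[OF p(1) p(2)]])
    thus ?thesis unfolding s_def by simp
  qed
  have Q2: "Q y \<le> s * (\<Sum>j\<in>UNIV. (y$j)\<^sup>2)" for y
  proof -
    have "(\<Sum>j\<in>UNIV. (\<sigma> j)\<^sup>2/(c j)\<^sup>2 * (y$j)\<^sup>2) \<le> (\<Sum>j\<in>UNIV. s * (y$j)\<^sup>2)"
      using sj by (intro sum_mono mult_right_mono) auto
    thus ?thesis using Q1[of y] by (simp add: sum_distrib_left)
  qed
  have Ssym: "transpose \<Sigma> = \<Sigma>" using \<Sigma>_psd unfolding psd_mat_def by simp
  have Smv: "\<Sigma> *v x = A *v (\<Sigma> *v (transpose A *v x))
       - A *v (\<Sigma> *v (C *v (H *v (C *v (\<Sigma> *v (transpose A *v x)))))) + W *v x" for x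
  proof -
    have "\<Sigma> *v x = riccati A (diag_mat c) (diag_mat (\<lambda>j. (\<sigma> j)\<^sup>2)) W \<Sigma> *v x"
      using \<Sigma>_sol by (rule arg_cong)
    also have "\<dots> = A *v (\<Sigma> *v (transpose A *v x))
       - A *v (\<Sigma> *v (C *v (H *v (C *v (\<Sigma> *v (transpose A *v x)))))) + W *v x"
      unfolding riccati_def diag_transpose unfolding C_def[symmetric] V_def[symmetric] H_def[symmetric]
      by (simp only: matrix_vector_mult_add_rdistrib matrix_vector_mult_diff_rdistrib
          matrix_vector_mul_assoc[symmetric])
    finally show ?thesis .
  qed
  have quad: "x \<bullet> (\<Sigma> *v x) = Q (transpose A *v x) + x \<bullet> (W *v x)" for x
  proof -
    define y where "y = transpose A *v x"
    have t: "x \<bullet> (A *v z) = y \<bullet> z" for z unfolding y_def by (rule inner_transp)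
    have Csym: "a \<bullet> (C *v b) = (C *v a) \<bullet> b" for a b unfolding C_def by (simp add: sym_inner)
    have Ss: "a \<bullet> (\<Sigma> *v b) = (\<Sigma> *v a) \<bullet> b" for a b using Ssym by (simp add: sym_inner)
    have "y \<bullet> (\<Sigma> *v (C *v (H *v (C *v (\<Sigma> *v y))))) = (C *v (\<Sigma> *v y)) \<bullet> (H *v (C *v (\<Sigma> *v y)))"
      by (simp only: Ss Csym)
    thus ?thesis unfolding Smv[of x] y_def[symmetric] inner_add_right inner_diff_right t Q_def by simp
  qed
  have Spd: "pd_mat \<Sigma>"
    unfolding pd_mat_def
  proof (intro conjI allI impI Ssym)
    fix x :: "real^'n" assume "x \<noteq> 0"
    hence "0 < x \<bullet> (W *v x)" using W_pd unfolding pd_mat_def by blast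
    thus "0 < x \<bullet> (\<Sigma> *v x)" unfolding quad using Q0 by (simp add: add_nonneg_pos)
  qed
  have diag: "\<Sigma>$i$i \<le> s * (\<Sum>j\<in>UNIV. (A$i$j)\<^sup>2) + W$i$i" for i
    using quad[of "axis i 1"] Q2[of "transpose A *v axis i 1"] unfolding axis_quad transpose_axis by simp
  have trS: "trace \<Sigma> \<le> trace (transpose A ** A) * s + trace W"
  proof -
    have "trace \<Sigma> \<le> (\<Sum>i\<in>UNIV. s * (\<Sum>j\<in>UNIV. (A$i$j)\<^sup>2) + W$i$i)"
      unfolding trace_def by (rule sum_mono) (rule diag)
    thus ?thesis unfolding trace_AtA by (simp add: sum.distrib sum_distrib_left trace_def mult.commute)
  qed
  have dpos: "0 < \<Sigma>$i$i" for i by (rule pd_diag_pos[OF Spd])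
  have "ln (det \<Sigma>) \<le> ln (\<Prod>i\<in>UNIV. \<Sigma>$i$i)"
    using hadamard[OF Spd] by simp
  also have "\<dots> = (\<Sum>i\<in>UNIV. ln (\<Sigma>$i$i))" by (rule ln_prod) (simp, metis dpos less_irrefl)
  also have "\<dots> \<le> (\<Sum>i\<in>UNIV. \<Sigma>$i$i)"
    by (rule sum_mono, rule order_trans[OF ln_le_minus_one[OF dpos]], simp)
  also have "\<dots> = trace \<Sigma>" by (simp add: trace_def)
  finally show ?thesis using trS unfolding s_def by simp
qed


end
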